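(* Let $y_0\in\mathbb{R}$, $b>0$, $\epsilon>0$, and let $f:[y_0,\infty)\to\mathbb{R}$ be such that $p:=1/f$ is well defined and twice differentiable on $[y_0,\infty)$, with $f(y_0)>0$, $f'(y)>0$ and $p''(y)>0$ for all $y\ge y_0$. Assume $b<\int_{y_0}^{\infty}p(y)\,dy$ (the integral may be $+\infty$). For $h>0$ and integers $N\ge 0$ put $\Sigma_{l,h,N}=\sum_{i=1}^{N}h\,p(y_0+hi)$. For each positive integer $j$ let $h^{(j)}=\epsilon/j$ and let $n_2^{(j)}$ be the smallest positive integer $N$ with $\Sigma_{l,h^{(j)},N}\ge b$, and assume that $n_2^{(1)}$ exists. Then for every positive integer $j$, $n_2^{(j)}$ exists and $$h^{(j)}\,n_2^{(j)}\le h^{(1)}\,n_2^{(1)}.$$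
   Context: $\Sigma_{l,h,N}$ is the lower rectangular (right-endpoint) sum for $\int_{y_0}^{y_0+hN}p(y)\,dy$ with step $h$; the empty sum ($N=0$) is $0$. The conditions on $f$ imply $f>0$, $p>0$ and $p$ strictly decreasing on $[y_0,\infty)$. *)

theory Defs
  imports "HOL-Analysis.Analysis"
begin

definition sigma_l :: "(real \<Rightarrow> real) \<Rightarrow> real \<Rightarrow> real \<Rightarrow> nat \<Rightarrow> real" where
  "sigma_l p y0 h N = (\<Sum>i=1..N. h * p (y0 + h * real i))"

definition n2 :: "(real \<Rightarrow> real) \<Rightarrow> real \<Rightarrow> real \<Rightarrow> real \<Rightarrow> nat" where
  "n2 p y0 b h = (LEAST N. N > 0 \<and> sigma_l p y0 h N \<ge> b)"

end

theory Submission
  imports Defs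
begin

lemma f_mono_aux:
  fixes f f' :: "real \<Rightarrow> real" and y0 :: real
  assumes f_deriv: "\<And>y. y \<ge> y0 \<Longrightarrow> (f has_real_derivative f' y) (at y within {y0..})"
    and f'_pos: "\<And>y. y \<ge> y0 \<Longrightarrow> f' y > 0"
    and ab: "y0 \<le> a" "a \<le> c"
  shows "f a \<le> f c"
proof (cases "a = c")
  case False
  hence lt: "a < c" using ab by simp
  have cont: "continuous_on {y0..} f"
    unfolding continuous_on_eq_continuous_within using f_deriv DERIV_continuous by (metis atLeast_iff)
  have "f a < f c"
  proof (rule DERIV_pos_imp_increasing_open[OF lt])
    fix x assume x: "a < x" "x < c"
    have "x \<in> interior {y0..}" using x ab by simp
    hence "at x within {y0..} = at x" by (rule at_within_interior)
    thus "\<exists>y. DERIV f x :> y \<and> y > 0"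
      using f_deriv[of x] f'_pos[of x] x ab by auto
  next
    show "continuous_on {a..c} f" by (rule continuous_on_subset[OF cont]) (use ab in auto)
  qed
  thus ?thesis by simp
qed simp

theorem lemma1:
  fixes f f' p' p'' :: "real \<Rightarrow> real" and y0 b \<epsilon> :: real
  assumes b_pos: "b > 0" and eps_pos: "\<epsilon> > 0"
    and f_nz: "\<And>y. y \<ge> y0 \<Longrightarrow> f y \<noteq> 0"
    and f_deriv: "\<And>y. y \<ge> y0 \<Longrightarrow> (f has_real_derivative f' y) (at y within {y0..})"
    and p_deriv: "\<And>y. y \<ge> y0 \<Longrightarrow> ((\<lambda>x. 1 / f x) has_real_derivative p' y) (at y within {y0..})"
    and p'_deriv: "\<And>y. y \<ge> y0 \<Longrightarrow> (p' has_real_derivative p'' y) (at y within {y0..})"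
    and f_y0: "f y0 > 0"
    and f'_pos: "\<And>y. y \<ge> y0 \<Longrightarrow> f' y > 0"
    and p''_pos: "\<And>y. y \<ge> y0 \<Longrightarrow> p'' y > 0"
    and integral: "ennreal b < (\<integral>\<^sup>+ y\<in>{y0..}. ennreal (1 / f y) \<partial>lborel)"
    and exists1: "\<exists>N::nat. N > 0 \<and> sigma_l (\<lambda>x. 1 / f x) y0 \<epsilon> N \<ge> b"
  shows "\<forall>j::nat. j > 0 \<longrightarrow>
           (\<exists>N::nat. N > 0 \<and> sigma_l (\<lambda>x. 1 / f x) y0 (\<epsilon> / real j) N \<ge> b) \<and>
           (\<epsilon> / real j) * real (n2 (\<lambda>x. 1 / f x) y0 b (\<epsilon> / real j))
             \<le> \<epsilon> * real (n2 (\<lambda>x. 1 / f x) y0 b \<epsilon>)"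
proof (intro allI impI conjI)
  fix j :: nat assume j: "j > 0"
  define p where "p = (\<lambda>x. 1 / f x)"
  have mono: "p c \<le> p a" if "y0 \<le> a" "a \<le> c" for a c
  proof -
    have "f y0 \<le> f a" using f_mono_aux[OF f_deriv f'_pos] that by simp
    moreover have "f a \<le> f c" using f_mono_aux[OF f_deriv f'_pos] that by simp
    ultimately show ?thesis unfolding p_def using f_y0
      by (simp add: frac_le)
  qed
  define N1 where "N1 = n2 p y0 b \<epsilon>"
  have N1: "N1 > 0 \<and> sigma_l p y0 \<epsilon> N1 \<ge> b"
    unfolding N1_def n2_def using exists1 unfolding p_def[symmetric]
    by (rule LeastI_ex)
  define h where "h = \<epsilon> / real j"
  have hpos: "h > 0" using j eps_pos by (simp add: h_def)
  have key: "sigma_l p y0 \<epsilon> N \<le> sigma_l p y0 h (j * N)" for N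
  proof (induction N)
    case 0 thus ?case by (simp add: sigma_l_def)
  next
    case (Suc N)
    have split: "sigma_l p y0 h (j * Suc N) = sigma_l p y0 h (j * N) + (\<Sum>i\<in>{j*N+1..j*N+j}. h * p (y0 + h * real i))"
      unfolding sigma_l_def
      using sum.ub_add_nat[of 1 "j*N" "\<lambda>i. h * p (y0 + h * real i)" j]
      by (simp add: algebra_simps)
    have "(\<Sum>i\<in>{j*N+1..j*N+j}. h * p (y0 + h * real i)) \<ge> (\<Sum>i\<in>{j*N+1..j*N+j}. h * p (y0 + \<epsilon> * real (Suc N)))"
    proof (rule sum_mono)
      fix i assume i: "i \<in> {j*N+1..j*N+j}"
      have "h * real i \<le> \<epsilon> * real (Suc N)"
      proof -
        have "i \<le> j * Suc N" using i by (simp add: algebra_simps)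
        hence "real i \<le> real j * real (Suc N)" by (metis of_nat_le_iff of_nat_mult)
        hence "h * real i \<le> h * (real j * real (Suc N))" using hpos by simp
        also have "\<dots> = \<epsilon> * real (Suc N)" using j by (simp add: h_def)
        finally show ?thesis .
      qed
      moreover have "0 \<le> h * real i" using hpos by simp
      ultimately have "p (y0 + \<epsilon> * real (Suc N)) \<le> p (y0 + h * real i)" by (intro mono) auto
      thus "h * p (y0 + \<epsilon> * real (Suc N)) \<le> h * p (y0 + h * real i)" using hpos by simp
    qed
    also have "(\<Sum>i\<in>{j*N+1..j*N+j}. h * p (y0 + \<epsilon> * real (Suc N))) = \<epsilon> * p (y0 + \<epsilon> * real (Suc N))"
      using j by (simp add: h_def)
    finally show ?case using Suc.IH split unfolding sigma_l_def by simp
  qed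
  have ex: "j * N1 > 0 \<and> sigma_l p y0 h (j * N1) \<ge> b" using N1 key[of N1] j by auto
  thus "\<exists>N::nat. N > 0 \<and> sigma_l (\<lambda>x. 1 / f x) y0 (\<epsilon> / real j) N \<ge> b"
    unfolding p_def h_def by blast
  have "n2 p y0 b h \<le> j * N1" unfolding n2_def by (rule Least_le) (use ex in auto)
  hence "h * real (n2 p y0 b h) \<le> h * (real j * real N1)" using hpos
    by (metis mult_le_cancel_left_pos of_nat_le_iff of_nat_mult)
  also have "\<dots> = \<epsilon> * real N1" using j by (simp add: h_def)
  finally show "(\<epsilon> / real j) * real (n2 (\<lambda>x. 1 / f x) y0 b (\<epsilon> / real j))
             \<le> \<epsilon> * real (n2 (\<lambda>x. 1 / f x) y0 b \<epsilon>)"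
    unfolding h_def N1_def p_def .
qed

end
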